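(* Let $n\ge 2$, $1\le t\le n-1$ and $0<\epsilon\le 1/2$. Consider the $\mathrm{Knapsack}$ instance with $n$ objects, $c_i=v_i=1$ for all $i\in V=[n]$ and capacity $C=2(1-\epsilon)$, with LP relaxation $K=\{x\in[0,1]^n: C-\sum_i x_i\ge 0\}$. Let $\alpha=C/(n+(t-1)(1-\epsilon))$ and define $y\in[0,1]^{\mathcal P_t(V)}$ by $y_\emptyset=1$, $y_{\{i\}}=\alpha$ for all $i\in V$, and $y_I=0$ whenever $|I|>1$. Then $y\in \mathrm{SA}^t(K)$, and $\sum_{i}v_iy_{\{i\}}=n\alpha$ while the optimal integral value is $1$.
   Context: Notation: $\mathcal P(U)$ is the power set of $U$ and $\mathcal P_t(U)$ the set of subsets of $U$ of size at most $t$. For a collection $\mathcal T$ of subsets of $V$ and a vector $y$ indexed by subsets of $V$, $M_{\mathcal T}(y)$ is the symmetric matrix with rows and columns indexed by $\mathcal T$ and $(I,J)$-entry $y_{I\cup J}$. For an affine function $g(x)=b+\sum_{j\in V}a_jx_j$, $g*y$ is the vector with $(g*y)_I=b\,y_I+\sum_{j\in V}a_j\,y_{I\cup\{j\}}$. The $t$-th Sherali-Adams lifted polytope of $K=\{x\in[0,1]^n: g_\ell(x)\ge0,\ \ell=1,\dots,m\}$ (with affine $g_\ell$) is $\mathrm{SA}^t(K)$, the set of $y\in[0,1]^{\mathcal P_t(V)}$ with $y_\emptyset=1$, $M_{\mathcal P(U)}(y)\succeq 0$ for every $U\subseteq V$ with $|U|\le t$, and $M_{\mathcal P(W)}(g_\ell*y)\succeq0$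 for every $\ell$ and every $W\subseteq V$ with $|W|\le t-1$. Here the only constraint is $g(x)=C-\sum_i x_i$. *)

theory Defs
  imports Complex_Main
begin

text \<open>Vectors indexed by subsets of the ground set are functions  nat set => real;
  only their values on the relevant index sets matter.\<close>

definition psd_on :: "nat set set \<Rightarrow> (nat set \<Rightarrow> nat set \<Rightarrow> real) \<Rightarrow> bool" where
  "psd_on T M \<longleftrightarrow> (\<forall>z :: nat set \<Rightarrow> real. (\<Sum>I\<in>T. \<Sum>J\<in>T. z I * M I J * z J) \<ge> 0)"

definition moment_mat :: "(nat set \<Rightarrow> real) \<Rightarrow> nat set \<Rightarrow> nat set \<Rightarrow> real" where
  "moment_mat y I J = y (I \<union> J)"

definition shift :: "nat set \<Rightarrow> real \<Rightarrow> (nat \<Rightarrow> real) \<Rightarrow> (nat set \<Rightarrow> real) \<Rightarrow> nat set \<Rightarrow> real" where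
  "shift V b a y I = b * y I + (\<Sum>j\<in>V. a j * y (I \<union> {j}))"

text \<open>The t-th Sherali-Adams lifted set of K = {x in [0,1]^V : b_l + sum_j a_l j x_j >= 0, l in L}.
  Constraints are given by a finite index set L with constant terms b and coefficients a.\<close>
definition SA :: "nat \<Rightarrow> nat set \<Rightarrow> 'l set \<Rightarrow> ('l \<Rightarrow> real) \<Rightarrow> ('l \<Rightarrow> nat \<Rightarrow> real)
                   \<Rightarrow> (nat set \<Rightarrow> real) set" where
  "SA t V L b a = {y.
      (\<forall>I. I \<subseteq> V \<and> card I \<le> t \<longrightarrow> 0 \<le> y I \<and> y I \<le> 1)
    \<and> y {} = 1
    \<and> (\<forall>U. U \<subseteq> V \<and> card U \<le> t \<longrightarrow> psd_on (Pow U) (moment_mat y))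
    \<and> (\<forall>l\<in>L. \<forall>W. W \<subseteq> V \<and> card W \<le> t - 1 \<longrightarrow>
                 psd_on (Pow W) (moment_mat (shift V (b l) (a l) y)))}"

definition knapsack_opt :: "nat set \<Rightarrow> (nat \<Rightarrow> real) \<Rightarrow> (nat \<Rightarrow> real) \<Rightarrow> real \<Rightarrow> real" where
  "knapsack_opt V c v C = Max {(\<Sum>i\<in>S. v i) | S. S \<subseteq> V \<and> (\<Sum>i\<in>S. c i) \<le> C}"

end

theory Submission
  imports Defs
begin

lemma supp_sum:
  fixes g :: "nat set \<Rightarrow> real"
  assumes "finite U" and "\<And>J. J \<subseteq> U \<Longrightarrow> J \<noteq> {} \<Longrightarrow> card J \<noteq> 1 \<Longrightarrow> g J = 0"
  shows "(\<Sum>J\<in>Pow U. g J) = g {} + (\<Sum>i\<in>U. g {i})"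
proof -
  have sub: "insert {} ((\<lambda>i. {i}) ` U) \<subseteq> Pow U" by auto
  have "(\<Sum>J\<in>Pow U. g J) = (\<Sum>J\<in>insert {} ((\<lambda>i. {i}) ` U). g J)"
  proof (rule sum.mono_neutral_right[OF _ sub])
    show "finite (Pow U)" using assms(1) by simp
    show "\<forall>i\<in>Pow U - insert {} ((\<lambda>i. {i}) ` U). g i = 0"
    proof
      fix J assume "J \<in> Pow U - insert {} ((\<lambda>i. {i}) ` U)"
      then have "J \<subseteq> U" "J \<noteq> {}" "card J \<noteq> 1" by (auto simp: card_1_singleton_iff)
      then show "g J = 0" using assms(2) by blast
    qed
  qed
  also have "\<dots> = g {} + (\<Sum>J\<in>(\<lambda>i. {i}) ` U. g J)"
    by (subst sum.insert) (auto simp: assms(1))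
  also have "(\<Sum>J\<in>(\<lambda>i. {i}) ` U. g J) = (\<Sum>i\<in>U. g {i})"
    by (subst sum.reindex) (auto simp: inj_on_def)
  finally show ?thesis .
qed

lemma card_ge2:
  assumes "finite U" "J \<subseteq> U" "J \<noteq> {}" "card J \<noteq> 1" "J \<subseteq> K" "K \<subseteq> U"
  shows "K \<noteq> {} \<and> card K \<noteq> 1"
proof -
  have "card J \<ge> 2" using assms by (metis One_nat_def card_0_eq finite_subset less_2_cases not_le)
  moreover have "card J \<le> card K" using assms by (meson card_mono finite_subset)
  ultimately show ?thesis by auto
qed

lemma quad_form:
  fixes f :: "nat set \<Rightarrow> real" and z :: "nat set \<Rightarrow> real"
  assumes U: "finite U"
    and f0: "f {} = a" and f1: "\<And>i. i \<in> U \<Longrightarrow> f {i} = b"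
    and f2: "\<And>K. K \<subseteq> U \<Longrightarrow> K \<noteq> {} \<Longrightarrow> card K \<noteq> 1 \<Longrightarrow> f K = 0"
  shows "(\<Sum>I\<in>Pow U. \<Sum>J\<in>Pow U. z I * moment_mat f I J * z J)
       = a * (z {})^2 + (\<Sum>i\<in>U. 2 * b * z {} * z {i} + b * (z {i})^2)"
proof -
  have inner0: "(\<Sum>J\<in>Pow U. z {} * moment_mat f {} J * z J) = a * (z {})^2 + (\<Sum>i\<in>U. b * z {} * z {i})"
    by (subst supp_sum[OF U]) (auto simp: moment_mat_def f0 f1 f2 power2_eq_square intro!: sum.cong)
  have inner1: "(\<Sum>J\<in>Pow U. z {i} * moment_mat f {i} J * z J) = b * z {} * z {i} + b * (z {i})^2"
    if i: "i \<in> U" for i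
  proof -
    have "(\<Sum>J\<in>Pow U. z {i} * moment_mat f {i} J * z J)
        = z {i} * f {i} * z {} + (\<Sum>j\<in>U. z {i} * f {i, j} * z {j})"
    proof (subst supp_sum[OF U])
      fix J assume J: "J \<subseteq> U" "J \<noteq> {}" "card J \<noteq> 1"
      have "insert i J \<noteq> {} \<and> card (insert i J) \<noteq> 1"
        by (rule card_ge2[OF U J]) (use i J in auto)
      then show "z {i} * moment_mat f {i} J * z J = 0"
        using f2[of "insert i J"] i J by (simp add: moment_mat_def)
    qed (simp add: moment_mat_def insert_commute)
    also have "(\<Sum>j\<in>U. z {i} * f {i, j} * z {j}) = (\<Sum>j\<in>U. if j = i then b * (z {i})^2 else 0)"
    proof (rule sum.cong[OF refl])
      fix j assume j: "j \<in> U"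
      show "z {i} * f {i, j} * z {j} = (if j = i then b * (z {i})^2 else 0)"
      proof (cases "j = i")
        case True then show ?thesis using f1 i by (simp add: power2_eq_square)
      next
        case False then have "f {i,j} = 0" using f2[of "{i,j}"] i j by auto
        then show ?thesis using False by simp
      qed
    qed
    also have "\<dots> = b * (z {i})^2" using i U by simp
    finally show ?thesis using f1 i by (simp add: mult.commute)
  qed
  have "(\<Sum>I\<in>Pow U. \<Sum>J\<in>Pow U. z I * moment_mat f I J * z J)
      = (\<Sum>J\<in>Pow U. z {} * moment_mat f {} J * z J)
        + (\<Sum>i\<in>U. \<Sum>J\<in>Pow U. z {i} * moment_mat f {i} J * z J)"
  proof (rule supp_sum[OF U])
    fix I assume I: "I \<subseteq> U" "I \<noteq> {}" "card I \<noteq> 1"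
    show "(\<Sum>J\<in>Pow U. z I * moment_mat f I J * z J) = 0"
    proof (rule sum.neutral, rule ballI)
      fix J assume "J \<in> Pow U"
      then have "I \<union> J \<noteq> {} \<and> card (I \<union> J) \<noteq> 1"
        using I by (intro card_ge2[OF U I]) auto
      then show "z I * moment_mat f I J * z J = 0"
        using f2[of "I \<union> J"] I \<open>J \<in> Pow U\<close> by (simp add: moment_mat_def)
    qed
  qed
  also have "\<dots> = a * (z {})^2 + (\<Sum>i\<in>U. b * z {} * z {i}) + (\<Sum>i\<in>U. b * z {} * z {i} + b * (z {i})^2)"
    using inner0 inner1 by simp
  also have "\<dots> = a * (z {})^2 + (\<Sum>i\<in>U. 2 * b * z {} * z {i} + b * (z {i})^2)"
    by (simp add: sum.distrib sum_distrib_left mult.assoc)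
  finally show ?thesis .
qed

lemma psd_lemma:
  fixes f :: "nat set \<Rightarrow> real"
  assumes U: "finite U"
    and f0: "f {} = a" and f1: "\<And>i. i \<in> U \<Longrightarrow> f {i} = b"
    and f2: "\<And>K. K \<subseteq> U \<Longrightarrow> K \<noteq> {} \<Longrightarrow> card K \<noteq> 1 \<Longrightarrow> f K = 0"
    and b: "0 \<le> b" and ab: "real (card U) * b \<le> a"
  shows "psd_on (Pow U) (moment_mat f)"
  unfolding psd_on_def
proof
  fix z :: "nat set \<Rightarrow> real"
  have "(\<Sum>I\<in>Pow U. \<Sum>J\<in>Pow U. z I * moment_mat f I J * z J)
       = a * (z {})^2 + (\<Sum>i\<in>U. 2 * b * z {} * z {i} + b * (z {i})^2)"
    by (rule quad_form[OF U f0 f1 f2])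
  also have "\<dots> = (a - real (card U) * b) * (z {})^2 + (\<Sum>i\<in>U. b * (z {i} + z {})^2)"
    by (simp add: sum.distrib power2_eq_square algebra_simps sum_distrib_left)
  also have "\<dots> \<ge> 0"
    using ab b by (intro add_nonneg_nonneg mult_nonneg_nonneg sum_nonneg) auto
  finally show "0 \<le> (\<Sum>I\<in>Pow U. \<Sum>J\<in>Pow U. z I * moment_mat f I J * z J)" .
qed

theorem mainTheorem2:
  fixes n t :: nat and \<epsilon> :: real
  assumes "n \<ge> 2" and "1 \<le> t" and "t \<le> n - 1"
    and "0 < \<epsilon>" and "\<epsilon> \<le> 1/2"
  defines "V \<equiv> {1..n}"
    and "C \<equiv> 2 * (1 - \<epsilon>)"
    and "c \<equiv> (\<lambda>i::nat. 1::real)"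
    and "v \<equiv> (\<lambda>i::nat. 1::real)"
    and "\<alpha> \<equiv> 2 * (1 - \<epsilon>) / (real n + (real t - 1) * (1 - \<epsilon>))"
    and "y \<equiv> (\<lambda>I::nat set. if I = {} then 1 else if card I = 1 then 2 * (1 - \<epsilon>) / (real n + (real t - 1) * (1 - \<epsilon>)) else 0)"
  shows "y \<in> SA t V {()} (\<lambda>_. C) (\<lambda>_ j. - c j)
         \<and> (\<Sum>i\<in>V. v i * y {i}) = real n * \<alpha>
         \<and> knapsack_opt V c v C = 1"
proof -
  have yd: "y = (\<lambda>I. if I = {} then 1 else if card I = 1 then \<alpha> else 0)"
    unfolding y_def \<alpha>_def ..
  have den: "real n + (real t - 1) * (1 - \<epsilon>) > 0"
  proof -
    have "(real t - 1) * (1 - \<epsilon>) \<ge> 0" using assms(2,5) by (intro mult_nonneg_nonneg) auto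
    moreover have "real n \<ge> 2" using assms(1) by simp
    ultimately show ?thesis by linarith
  qed
  have apos: "0 \<le> \<alpha>" unfolding \<alpha>_def using den assms(5) by simp
  have tle: "real t + 1 \<le> real n" using assms(1,3) by linarith
  have at: "real t * \<alpha> \<le> 1"
  proof -
    have "real t * (2 * (1 - \<epsilon>)) \<le> real n + (real t - 1) * (1 - \<epsilon>)"
    proof -
      have h: "(real t + 1) * (1 - \<epsilon>) \<le> (real t + 1) * 1"
        using assms(4) by (intro mult_left_mono) auto
      have e: "real t * (2 * (1 - \<epsilon>)) = (real t + 1) * (1 - \<epsilon>) + (real t - 1) * (1 - \<epsilon>)"
        by (simp add: algebra_simps)
      have h': "(real t + 1) * (1 - \<epsilon>) \<le> real t + 1" using h by simp
      show ?thesis unfolding e using h' tle by linarith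
    qed
    then show ?thesis unfolding \<alpha>_def using den by (simp add: field_simps)
  qed
  have a1: "\<alpha> \<le> 1"
  proof -
    have "1 * \<alpha> \<le> real t * \<alpha>" using assms(2) apos by (intro mult_right_mono) auto
    then show ?thesis using at by linarith
  qed
  have finV: "finite V" unfolding V_def by simp
  have cardV: "card V = n" unfolding V_def by simp
  have yK: "y K = 0" if "K \<noteq> {}" "card K \<noteq> 1" for K using that yd by simp
  have mom: "psd_on (Pow U) (moment_mat y)" if "U \<subseteq> V" "card U \<le> t" for U
  proof (rule psd_lemma[where a=1 and b=\<alpha>])
    show "finite U" using that finV finite_subset by blast
    have "real (card U) * \<alpha> \<le> real t * \<alpha>" using that apos by (simp add: mult_right_mono)
    then show "real (card U) * \<alpha> \<le> 1" using at by linarith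
  qed (auto simp: yd apos)
  define g where "g = shift V C (\<lambda>j. - c j) y"
  have g0: "g {} = C - real n * \<alpha>"
    unfolding g_def shift_def c_def using cardV by (simp add: yd)
  have g1: "g {i} = C * \<alpha> - \<alpha>" if "i \<in> V" for i
  proof -
    have "(\<Sum>j\<in>V. - c j * y ({i} \<union> {j})) = (\<Sum>j\<in>V. if j = i then - \<alpha> else 0)"
      by (rule sum.cong) (auto simp: c_def yd)
    also have "\<dots> = - \<alpha>" using that finV by simp
    finally show ?thesis unfolding g_def shift_def by (simp add: yd)
  qed
  have g2: "g K = 0" if K: "K \<subseteq> V" "K \<noteq> {}" "card K \<noteq> 1" for K
  proof -
    have "y (K \<union> {j}) = 0" for j
    proof (rule yK)
      have "K \<union> {j} \<noteq> {} \<and> card (K \<union> {j}) \<noteq> 1"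
        by (rule card_ge2[where U="insert j V" and J=K]) (use K finV in auto)
      then show "K \<union> {j} \<noteq> {}" "card (K \<union> {j}) \<noteq> 1" by auto
    qed
    then show ?thesis unfolding g_def shift_def using yK[OF K(2,3)] by simp
  qed
  have shf: "psd_on (Pow W) (moment_mat g)" if W: "W \<subseteq> V" "card W \<le> t - 1" for W
  proof (rule psd_lemma[where a="C - real n * \<alpha>" and b="C * \<alpha> - \<alpha>"])
    show fW: "finite W" using W finV finite_subset by blast
    show "g {} = C - real n * \<alpha>" by (rule g0)
    show "\<And>i. i \<in> W \<Longrightarrow> g {i} = C * \<alpha> - \<alpha>" using g1 W by auto
    show "\<And>K. K \<subseteq> W \<Longrightarrow> K \<noteq> {} \<Longrightarrow> card K \<noteq> 1 \<Longrightarrow> g K = 0" using g2 W by auto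
    have C1: "C - 1 \<ge> 0" unfolding C_def using assms(5) by simp
    show "0 \<le> C * \<alpha> - \<alpha>" proof -
      have "0 \<le> (C - 1) * \<alpha>" using C1 apos by simp
      then show ?thesis by (simp add: algebra_simps)
    qed
    have cw: "real (card W) \<le> real t - 1" using W assms(2) by linarith
    have eq: "\<alpha> * (real n + (real t - 1) * (1 - \<epsilon>)) = C"
      unfolding \<alpha>_def C_def using den by simp
    have "real (card W) * (C * \<alpha> - \<alpha>) \<le> (real t - 1) * (C * \<alpha> - \<alpha>)"
      using cw \<open>0 \<le> C * \<alpha> - \<alpha>\<close> by (intro mult_right_mono) auto
    also have "(real t - 1) * (C * \<alpha> - \<alpha>) \<le> (real t - 1) * ((1 - \<epsilon>) * \<alpha>)"
      using assms(2,4) apos unfolding C_def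
      by (intro mult_left_mono) (auto simp: algebra_simps mult_right_mono)
    also have "\<dots> = C - real n * \<alpha>" using eq by (simp add: algebra_simps)
    finally show "real (card W) * (C * \<alpha> - \<alpha>) \<le> C - real n * \<alpha>" .
  qed
  have SA: "y \<in> SA t V {()} (\<lambda>_. C) (\<lambda>_ j. - c j)"
    unfolding SA_def using mom shf apos a1 unfolding g_def by (auto simp: yd)
  have sum: "(\<Sum>i\<in>V. v i * y {i}) = real n * \<alpha>"
    using cardV by (simp add: v_def yd)
  have ks: "knapsack_opt V c v C = 1"
  proof -
    have set: "{(\<Sum>i\<in>S. v i) | S. S \<subseteq> V \<and> (\<Sum>i\<in>S. c i) \<le> C} = {0, 1}"
    proof
      show "{0, 1} \<subseteq> {(\<Sum>i\<in>S. v i) | S. S \<subseteq> V \<and> (\<Sum>i\<in>S. c i) \<le> C}"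
      proof -
        have "1 \<in> V" unfolding V_def using assms(1) by simp
        moreover have "C \<ge> 1" "C \<ge> 0" unfolding C_def using assms(4,5) by auto
        ultimately have h: "1 \<in> V" "1 \<le> C" "0 \<le> C" by auto
        have m1: "(\<Sum>i\<in>{1::nat}. v i) \<in> {(\<Sum>i\<in>S. v i) | S. S \<subseteq> V \<and> (\<Sum>i\<in>S. c i) \<le> C}"
          unfolding c_def using h by (intro CollectI exI[of _ "{1::nat}"]) simp
        have m0: "(\<Sum>i\<in>{}. v i) \<in> {(\<Sum>i\<in>S. v i) | S. S \<subseteq> V \<and> (\<Sum>i\<in>S. c i) \<le> C}"
          unfolding c_def using h by (intro CollectI exI[of _ "{}"]) simp
        show ?thesis using m0 m1 by (simp add: v_def)
      qed
      show "{(\<Sum>i\<in>S. v i) | S. S \<subseteq> V \<and> (\<Sum>i\<in>S. c i) \<le> C} \<subseteq> {0, 1}"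
      proof
        fix x assume "x \<in> {(\<Sum>i\<in>S. v i) | S. S \<subseteq> V \<and> (\<Sum>i\<in>S. c i) \<le> C}"
        then obtain S where S: "S \<subseteq> V" "real (card S) \<le> C" "x = real (card S)"
          by (auto simp: v_def c_def)
        have "C < 2" unfolding C_def using assms(4) by simp
        then have "card S \<le> 1" using S by linarith
        then show "x \<in> {0, 1}" using S by auto
      qed
    qed
    show ?thesis unfolding knapsack_opt_def set by simp
  qed
  show ?thesis using SA sum ks by blast
qed

end
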